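(* The lower Vietoris monad $H$ on $\mathbf{Top}$ is observational.
   Context: $\mathbf{Top}$ is the category of topological spaces with product topologies. $HX$ is the set of closed subsets of $X$ (including $\emptyset$) with topology generated by the sets $\{C: C\cap U\neq\emptyset\}$ for $U\subseteq X$ open; $\eta_X(x)=\overline{\{x\}}$; $\mu_X(\mathcal{C})=\overline{\bigcup_{C\in\mathcal{C}}C}$; $Hf(C)=\overline{f(C)}$; commutative monoidal structure $\nabla(C,D)=C\times D$. For a commutative monad $T$ on a cartesian monoidal category: $\mathsf{Kl}(T)$ has morphisms $f:A\rightsquigarrow B$ corresponding to $f^\sharp:A\to TB$, composition $(g\circledcirc f)^\sharp=\mu\circ T(g^\sharp)\circ f^\sharp$, tensor $\otimes$ equal to $\times$ on objects with $(f\otimes g)^\sharp=\nabla\circ(f^\sharp\times g^\sharp)$; $\mathsf{force}_A^\sharp=1_{TA}$; $\mathsf{copy}_n^\sharp=\eta\circ\Delta_n:TX\to T((TX)^n)$; $\mathsf{samp}_n=\mathsf{force}^{\otimes n}\circledcirc\mathsf{copy}_n:TX\rightsquigarrow X^{\otimes n}$. $T$ is observational if for every $X$ the family $(\mathsf{samp}_n)_{n\in\mathbb{N}}$ is jointly monic in $\mathsf{Kl}(T)$. *)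

theory Defs
  imports "HOL-Analysis.Analysis"
begin

text \<open>Lower Vietoris space HX: closed subsets of X (including the empty set), topology
generated by the sets {C. C meets U} for U open; the whole carrier HX is also declared
open, so that the carrier of the generated topology is exactly the set of closed sets.\<close>
definition lower_vietoris :: "'a topology \<Rightarrow> 'a set topology" where
  "lower_vietoris X = topology_generated_by
     (insert {C. closedin X C} {{C. closedin X C \<and> C \<inter> U \<noteq> {}} | U. openin X U})"

definition lv_eta :: "'a topology \<Rightarrow> 'a \<Rightarrow> 'a set" where
  "lv_eta X x = X closure_of {x}"

definition lv_mu :: "'a topology \<Rightarrow> 'a set set \<Rightarrow> 'a set" where
  "lv_mu X \<C> = X closure_of (\<Union>\<C>)"

definition lv_map :: "'b topology \<Rightarrow> ('a \<Rightarrow> 'b) \<Rightarrow> 'a set \<Rightarrow> 'b set" where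
  "lv_map Y h C = Y closure_of (h ` C)"

text \<open>Kleisli composition: for f : A ~> B and g : B ~> Z (given by their sharps),
(g o f)^# = mu_Z o H(g^#) o f^#.\<close>
definition kcomp :: "'c topology \<Rightarrow> ('b \<Rightarrow> 'c set) \<Rightarrow> ('a \<Rightarrow> 'b set) \<Rightarrow> 'a \<Rightarrow> 'c set" where
  "kcomp Z g f = (\<lambda>a. lv_mu Z (lv_map (lower_vietoris Z) g (f a)))"

definition power_sp :: "'a topology \<Rightarrow> nat \<Rightarrow> (nat \<Rightarrow> 'a) topology" where
  "power_sp X n = product_topology (\<lambda>_. X) {..<n}"

definition copy_n :: "'a topology \<Rightarrow> nat \<Rightarrow> 'a set \<Rightarrow> (nat \<Rightarrow> 'a set) set" where
  "copy_n X n C = lv_eta (power_sp (lower_vietoris X) n) (restrict (\<lambda>_. C) {..<n})"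

text \<open>(force^{\<otimes>n})^# = n-fold nabla o (1 x ... x 1) : (HX)^n \<rightarrow> H(X^n),
the n-fold nabla being the product of the closed sets.\<close>
definition force_tensor_n :: "nat \<Rightarrow> (nat \<Rightarrow> 'a set) \<Rightarrow> (nat \<Rightarrow> 'a) set" where
  "force_tensor_n n Cs = PiE {..<n} Cs"

definition samp_n :: "'a topology \<Rightarrow> nat \<Rightarrow> 'a set \<Rightarrow> (nat \<Rightarrow> 'a) set" where
  "samp_n X n = kcomp (power_sp X n) (force_tensor_n n) (copy_n X n)"

end

theory Submission
  imports Defs
begin

lemma lv_topspace: "topspace (lower_vietoris X) = {C. closedin X C}"
  unfolding lower_vietoris_def by auto

lemma lv_open: "openin X U \<Longrightarrow> openin (lower_vietoris X) {C. closedin X C \<and> C \<inter> U \<noteq> {}}"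
  unfolding lower_vietoris_def by (rule topology_generated_by_Basis) blast

lemma lv_closure_meet:
  assumes "E \<in> lower_vietoris X closure_of S" "openin X W" "E \<inter> W \<noteq> {}"
  shows "\<exists>C\<in>S. C \<inter> W \<noteq> {}"
proof -
  let ?T = "{C. closedin X C \<and> C \<inter> W \<noteq> {}}"
  have "E \<in> topspace (lower_vietoris X)"
    by (rule closure_of_subset_topspace[THEN subsetD, OF assms(1)])
  then have E: "closedin X E" by (simp add: lv_topspace)
  have ET: "E \<in> ?T" using E assms(3) by simp
  have "\<forall>T. E \<in> T \<and> openin (lower_vietoris X) T \<longrightarrow> (\<exists>y. y \<in> S \<and> y \<in> T)"
    using assms(1) unfolding in_closure_of by simp
  then obtain y where "y \<in> S" "y \<in> ?T"
    using ET lv_open[OF assms(2)] by meson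
  then show ?thesis by auto
qed

lemma lv_closure_sub:
  assumes "closedin X K" "\<forall>C\<in>S. C \<subseteq> K" "E \<in> lower_vietoris X closure_of S"
  shows "E \<subseteq> K"
proof (rule ccontr)
  assume "\<not> E \<subseteq> K" then obtain x where x: "x \<in> E" "x \<notin> K" by auto
  have E: "closedin X E" using assms(3) closure_of_subset_topspace[of "lower_vietoris X" S]
    by (auto simp: lv_topspace)
  have "x \<in> topspace X" using x(1) closedin_subset[OF E] by blast
  then have "E \<inter> (topspace X - K) \<noteq> {}" using x by blast
  then obtain C where "C \<in> S" "C \<inter> (topspace X - K) \<noteq> {}"
    using lv_closure_meet[OF assms(3) openin_diff[OF openin_topspace assms(1)]] by blast
  moreover have "C \<subseteq> K" using assms(2) \<open>C \<in> S\<close> by blast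
  ultimately show False by blast
qed

lemma copy_eq:
  "copy_n X n C = PiE {..<n} (\<lambda>_. lower_vietoris X closure_of {C})"
proof -
  have "{restrict (\<lambda>_. C) {..<n}} = PiE {..<n} (\<lambda>i. {restrict (\<lambda>_. C) {..<n} i})"
    by (rule PiE_singleton[symmetric]) simp
  also have "\<dots> = PiE {..<n} (\<lambda>_. {C})"
    by (rule PiE_cong) simp
  finally have "{restrict (\<lambda>_. C) {..<n}} = PiE {..<n} (\<lambda>_. {C})" .
  then show ?thesis
    unfolding copy_n_def lv_eta_def power_sp_def
    by (simp only: closure_of_product_topology)
qed

lemma samp_upper:
  assumes C: "closedin X C"
  shows "samp_n X n C \<subseteq> PiE {..<n} (\<lambda>_. C)"
proof -
  let ?K = "PiE {..<n} (\<lambda>_. C)"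
  have Kc: "closedin (power_sp X n) ?K"
    unfolding power_sp_def using C by (simp add: closedin_product_topology)
  have csub: "Cs i \<subseteq> C" if "Cs \<in> copy_n X n C" "i < n" for Cs i
  proof -
    have "Cs i \<in> lower_vietoris X closure_of {C}"
      using that unfolding copy_eq by (auto simp: PiE_iff)
    then show "Cs i \<subseteq> C" using lv_closure_sub[OF C, of "{C}"] by simp
  qed
  have fsub: "\<forall>P\<in>force_tensor_n n ` copy_n X n C. P \<subseteq> ?K"
  proof
    fix P assume "P \<in> force_tensor_n n ` copy_n X n C"
    then obtain Cs where "Cs \<in> copy_n X n C" "P = PiE {..<n} Cs"
      unfolding force_tensor_n_def by blast
    then show "P \<subseteq> ?K" using csub[of Cs] by (auto intro!: PiE_mono)
  qed
  have "\<forall>E\<in>lower_vietoris (power_sp X n) closure_of (force_tensor_n n ` copy_n X n C). E \<subseteq> ?K"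
    using lv_closure_sub[OF Kc fsub] by blast
  then have "\<Union>(lower_vietoris (power_sp X n) closure_of (force_tensor_n n ` copy_n X n C)) \<subseteq> ?K"
    by (intro Union_least) blast
  then show ?thesis
    unfolding samp_n_def kcomp_def lv_mu_def lv_map_def
    by (rule closure_of_minimal[OF _ Kc])
qed

lemma samp_closed: "closedin (power_sp X n) (samp_n X n C)"
  unfolding samp_n_def kcomp_def lv_mu_def by simp

lemma lv_Union_sub:
  assumes "S \<subseteq> topspace (lower_vietoris Y)"
  shows "\<Union>S \<subseteq> topspace Y"
proof
  fix x assume "x \<in> \<Union>S"
  then obtain E where "E \<in> S" "x \<in> E" by blast
  then have "closedin Y E" using assms by (auto simp: lv_topspace)
  then show "x \<in> topspace Y" using closedin_subset \<open>x \<in> E\<close> by blast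
qed

lemma samp_lower:
  assumes C: "closedin X C"
  shows "PiE {..<n} (\<lambda>_. C) \<subseteq> samp_n X n C"
proof -
  let ?K = "PiE {..<n} (\<lambda>_. C)"
  let ?c = "restrict (\<lambda>_. C) {..<n}"
  let ?Y = "lower_vietoris (power_sp X n)"
  have Kc: "closedin (power_sp X n) ?K"
    unfolding power_sp_def using C by (simp add: closedin_product_topology)
  have "C \<in> lower_vietoris X closure_of {C}"
    by (rule closure_of_subset[THEN subsetD]) (use C in \<open>auto simp: lv_topspace\<close>)
  then have "?c \<in> copy_n X n C"
    unfolding copy_eq by auto
  moreover have "force_tensor_n n ?c = ?K"
    unfolding force_tensor_n_def by (rule PiE_cong) auto
  ultimately have K1: "?K \<in> force_tensor_n n ` copy_n X n C" by (metis image_eqI)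
  have "?K \<in> topspace ?Y" using Kc by (simp add: lv_topspace)
  then have K2: "?K \<in> ?Y closure_of (force_tensor_n n ` copy_n X n C)"
    using K1 unfolding in_closure_of by blast
  have sub: "\<Union>(?Y closure_of (force_tensor_n n ` copy_n X n C)) \<subseteq> topspace (power_sp X n)"
    by (rule lv_Union_sub[OF closure_of_subset_topspace])
  have "?K \<subseteq> \<Union>(?Y closure_of (force_tensor_n n ` copy_n X n C))"
    using K2 by blast
  also have "\<dots> \<subseteq> samp_n X n C"
    unfolding samp_n_def kcomp_def lv_mu_def lv_map_def
    by (rule closure_of_subset[OF sub])
  finally show ?thesis .
qed

definition basisP :: "'a topology \<Rightarrow> 'a set set \<Rightarrow> 'a set \<Rightarrow> nat \<Rightarrow> (nat \<Rightarrow> 'a set) \<Rightarrow> bool" where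
  "basisP X V D n U \<longleftrightarrow> (\<forall>i<n. openin X (U i)) \<and> (\<forall>i<n. D \<inter> U i \<noteq> {}) \<and>
               (\<forall>C. closedin X C \<and> (\<forall>i<n. C \<inter> U i \<noteq> {}) \<longrightarrow> C \<in> V)"

lemma basisP_mono: "basisP X V D n U \<Longrightarrow> V \<subseteq> W \<Longrightarrow> basisP X W D n U"
  unfolding basisP_def by blast

lemma basisP_Int:
  assumes A: "basisP X a D n1 U1" and B: "basisP X b D n2 U2"
  shows "basisP X (a \<inter> b) D (n1 + n2) (\<lambda>i. if i < n1 then U1 i else U2 (i - n1))"
proof -
  define U where "U i = (if i < n1 then U1 i else U2 (i - n1))" for i
  have A1: "\<forall>i<n1. openin X (U1 i)" and A2: "\<forall>i<n1. D \<inter> U1 i \<noteq> {}"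
    and A3: "\<forall>C. closedin X C \<and> (\<forall>i<n1. C \<inter> U1 i \<noteq> {}) \<longrightarrow> C \<in> a"
    using A unfolding basisP_def by blast+
  have B1: "\<forall>i<n2. openin X (U2 i)" and B2: "\<forall>i<n2. D \<inter> U2 i \<noteq> {}"
    and B3: "\<forall>C. closedin X C \<and> (\<forall>i<n2. C \<inter> U2 i \<noteq> {}) \<longrightarrow> C \<in> b"
    using B unfolding basisP_def by blast+
  have 1: "openin X (U i)" if "i < n1+n2" for i
  proof (cases "i < n1")
    case True then show ?thesis using A1 by (simp add: U_def)
  next
    case False then have "i - n1 < n2" using that by linarith
    then show ?thesis using B1 False by (simp add: U_def)
  qed
  have 2: "D \<inter> U i \<noteq> {}" if "i < n1+n2" for i
  proof (cases "i < n1")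
    case True then show ?thesis using A2 by (simp add: U_def)
  next
    case False then have "i - n1 < n2" using that by linarith
    then show ?thesis using B2 False by (simp add: U_def)
  qed
  have 3: "C \<in> a \<inter> b" if c: "closedin X C" and h: "\<forall>i<n1+n2. C \<inter> U i \<noteq> {}" for C
  proof -
    have "C \<inter> U1 i \<noteq> {}" if "i < n1" for i
    proof -
      have "i < n1 + n2" using that by linarith
      then have "C \<inter> U i \<noteq> {}" using h by blast
      then show ?thesis using that by (simp add: U_def)
    qed
    then have "C \<in> a" using A3 c by blast
    have "C \<inter> U2 i \<noteq> {}" if "i < n2" for i
    proof -
      have "n1 + i < n1 + n2" using that by linarith
      then have "C \<inter> U (n1 + i) \<noteq> {}" using h by blast
      then show ?thesis by (simp add: U_def)
    qed
    then have "C \<in> b" using B3 c by blast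
    then show ?thesis using \<open>C \<in> a\<close> by blast
  qed
  show ?thesis unfolding basisP_def U_def[symmetric] using 1 2 3 by blast
qed

lemma lv_basis:
  assumes "openin (lower_vietoris X) V" "D \<in> V"
  shows "\<exists>n U. basisP X V D n U"
proof -
  have "generate_topology_on
     (insert {C. closedin X C} {{C. closedin X C \<and> C \<inter> U \<noteq> {}} | U. openin X U}) V"
    using assms(1) unfolding lower_vietoris_def openin_topology_generated_by_iff .
  then show ?thesis using assms(2)
  proof (induction arbitrary: D)
    case Empty
    then show ?case by simp
  next
    case (Int a b)
    have "D \<in> a" "D \<in> b" using Int.prems by auto
    then obtain n1 U1 n2 U2 where "basisP X a D n1 U1" "basisP X b D n2 U2"
      using Int.IH by meson
    then show ?case using basisP_Int by blast
  next
    case (UN K)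
    then obtain k where k: "k \<in> K" "D \<in> k" by blast
    then obtain n U where "basisP X k D n U" using UN.IH by meson
    moreover have "k \<subseteq> \<Union>K" using k by blast
    ultimately show ?case using basisP_mono by blast
  next
    case (Basis s)
    then consider "s = {C. closedin X C}" | U where "openin X U" "s = {C. closedin X C \<and> C \<inter> U \<noteq> {}}"
      by blast
    then show ?case
    proof cases
      case 1
      then have "basisP X s D 0 (\<lambda>_. {})" unfolding basisP_def by simp
      then show ?thesis by blast
    next
      case 2
      then have "basisP X s D 1 (\<lambda>_. U)" using Basis.prems unfolding basisP_def by simp
      then show ?thesis by blast
    qed
  qed
qed

lemma key:
  assumes F: "closedin (lower_vietoris X) F" and G: "G \<subseteq> topspace (lower_vietoris X)"
  and eq: "\<And>n. lv_mu (power_sp X n) (lv_map (lower_vietoris (power_sp X n)) (samp_n X n) G)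
          \<subseteq> lv_mu (power_sp X n) (lv_map (lower_vietoris (power_sp X n)) (samp_n X n) F)"
  shows "G \<subseteq> F"
proof
  fix D assume DG: "D \<in> G"
  show "D \<in> F"
  proof (rule ccontr)
    assume DF: "D \<notin> F"
    have Dc: "closedin X D" using G DG by (auto simp: lv_topspace)
    have op: "openin (lower_vietoris X) (topspace (lower_vietoris X) - F)"
      using F by (simp add: openin_diff)
    have "D \<in> topspace (lower_vietoris X) - F" using DG G DF by blast
    then obtain n U where "basisP X (topspace (lower_vietoris X) - F) D n U"
      using lv_basis[OF op] by blast
    then have U1: "\<forall>i<n. openin X (U i)" and U2: "\<forall>i<n. D \<inter> U i \<noteq> {}"
      and U3: "\<forall>C. closedin X C \<and> (\<forall>i<n. C \<inter> U i \<noteq> {}) \<longrightarrow> C \<in> topspace (lower_vietoris X) - F"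
      unfolding basisP_def by blast+
    define p where "p = restrict (\<lambda>i. SOME x. x \<in> D \<inter> U i) {..<n}"
    have pi: "p i \<in> D \<inter> U i" if "i < n" for i
    proof -
      have "\<exists>x. x \<in> D \<inter> U i" using U2 that by blast
      then have "(SOME x. x \<in> D \<inter> U i) \<in> D \<inter> U i" by (rule someI_ex)
      then show ?thesis using that by (simp add: p_def)
    qed
    have pD: "p \<in> PiE {..<n} (\<lambda>_. D)" using pi by (auto simp: p_def PiE_iff)
    have pU: "p \<in> PiE {..<n} U" using pi by (auto simp: p_def PiE_iff)
    let ?Y = "lower_vietoris (power_sp X n)"
    have "samp_n X n ` G \<subseteq> topspace ?Y" using samp_closed by (auto simp: lv_topspace)
    then have "samp_n X n ` G \<subseteq> ?Y closure_of (samp_n X n ` G)"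
      by (rule closure_of_subset)
    moreover have "samp_n X n D \<in> samp_n X n ` G" using DG by (rule imageI)
    ultimately have "samp_n X n D \<in> ?Y closure_of (samp_n X n ` G)" by (rule subsetD)
    then have "p \<in> \<Union>(?Y closure_of (samp_n X n ` G))" using pD samp_lower[OF Dc] by blast
    then have "p \<in> lv_mu (power_sp X n) (lv_map ?Y (samp_n X n) G)"
      unfolding lv_mu_def lv_map_def
      using closure_of_subset[OF lv_Union_sub[OF closure_of_subset_topspace[of ?Y "samp_n X n ` G"]]] by blast
    then have pF: "p \<in> power_sp X n closure_of \<Union>(?Y closure_of (samp_n X n ` F))"
      using eq[of n] unfolding lv_mu_def lv_map_def by blast
    have Wo: "openin (power_sp X n) (PiE {..<n} U)"
      unfolding power_sp_def using U1 by (simp add: openin_PiE)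
    have "\<forall>T. p \<in> T \<and> openin (power_sp X n) T \<longrightarrow> (\<exists>y. y \<in> \<Union>(?Y closure_of (samp_n X n ` F)) \<and> y \<in> T)"
      using pF unfolding in_closure_of by blast
    then obtain y where y1: "y \<in> \<Union>(?Y closure_of (samp_n X n ` F))" and y2: "y \<in> PiE {..<n} U"
      using pU Wo by blast
    from y1 obtain E where yE: "y \<in> E" and E1: "E \<in> ?Y closure_of (samp_n X n ` F)"
      by (rule UnionE)
    have E2: "E \<inter> PiE {..<n} U \<noteq> {}" using yE y2 by blast
    have "\<exists>Q\<in>samp_n X n ` F. Q \<inter> PiE {..<n} U \<noteq> {}"
      by (rule lv_closure_meet[OF E1 Wo E2])
    then obtain C where CF: "C \<in> F" and CQ: "samp_n X n C \<inter> PiE {..<n} U \<noteq> {}"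
      by blast
    have "C \<in> topspace (lower_vietoris X)" using closedin_subset[OF F] CF by (rule subsetD)
    then have Cc: "closedin X C" by (simp add: lv_topspace)
    from CQ obtain q where q1: "q \<in> samp_n X n C" and q2: "q \<in> PiE {..<n} U" by blast
    have "q \<in> PiE {..<n} (\<lambda>_. C)" using samp_upper[OF Cc, of n] q1 by (rule subsetD)
    with q2 have "\<forall>i<n. C \<inter> U i \<noteq> {}" by (auto simp: PiE_iff)
    then have "C \<in> topspace (lower_vietoris X) - F" using U3 Cc by blast
    then show False using CF by blast
  qed
qed

theorem theorem9p4:
  fixes X :: "'a topology" and A :: "'b topology" and f g :: "'b \<Rightarrow> 'a set set"
  assumes "continuous_map A (lower_vietoris (lower_vietoris X)) f"
    and "continuous_map A (lower_vietoris (lower_vietoris X)) g"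
    and "\<forall>n. \<forall>a\<in>topspace A.
           kcomp (power_sp X n) (samp_n X n) f a = kcomp (power_sp X n) (samp_n X n) g a"
  shows "\<forall>a\<in>topspace A. f a = g a"
proof
  fix a assume a: "a \<in> topspace A"
  have "f a \<in> topspace (lower_vietoris (lower_vietoris X))"
    using assms(1) a by (rule continuous_map_image_subset_topspace[THEN subsetD, OF _ imageI])
  then have Fc: "closedin (lower_vietoris X) (f a)" by (simp add: lv_topspace)
  have "g a \<in> topspace (lower_vietoris (lower_vietoris X))"
    using assms(2) a by (rule continuous_map_image_subset_topspace[THEN subsetD, OF _ imageI])
  then have Gc: "closedin (lower_vietoris X) (g a)" by (simp add: lv_topspace)
  have eq: "lv_mu (power_sp X n) (lv_map (lower_vietoris (power_sp X n)) (samp_n X n) (f a))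
          = lv_mu (power_sp X n) (lv_map (lower_vietoris (power_sp X n)) (samp_n X n) (g a))" for n
    using assms(3)[THEN spec[of _ n], THEN bspec[OF _ a]] unfolding kcomp_def by simp
  have "g a \<subseteq> f a" by (rule key[OF Fc closedin_subset[OF Gc]]) (simp add: eq)
  moreover have "f a \<subseteq> g a" by (rule key[OF Gc closedin_subset[OF Fc]]) (simp add: eq)
  ultimately show "f a = g a" by blast
qed

end
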